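(* Let $0\le v\le\tfrac12$. Then, as $n_{\mathcal S}+n_0\to\infty$ and $\lambda_1\to0$, $$\left\|(L_{T^{(0)}})^{v}\Big(\sum_{l\in\mathcal S^*}\alpha_lL_{T^{(l)}}+\lambda_1I\Big)^{-1}\sum_{l\in\mathcal S^*}g_{ln}\right\|_{L^2}^2=O_P\!\left(\big((n_{\mathcal S}+n_0)\lambda_1^{1-2v+\frac1{2r}}\big)^{-1}\right),$$ where $g_{ln}=\frac1{n_{\mathcal S}+n_0}\sum_{i=1}^{n_l}\epsilon_i^{(l)}L_{K^{1/2}}X_i^{(l)}$.
   Context: Setting: tasks $l\in\mathcal S^*=\{0\}\cup\mathcal S$ (finite), data $Y_i^{(l)}=\langle X_i^{(l)},\beta^{(l)}\rangle+\epsilon_i^{(l)}$, $i=1,\dots,n_l$, independent across $i$ and $l$; $X_i^{(l)}$ mean-zero in $L^2(\mathcal T)$ with covariance kernel $C^{(l)}$; $\epsilon_i^{(l)}$ independent of covariates with mean zero and variance $\sigma_l^2<\infty$. $K$ is a reproducing kernel, $L_\Gamma f=\int\Gamma(\cdot,t)f(t)dt$, $L_{T^{(l)}}=L_{K^{1/2}}L_{C^{(l)}}L_{K^{1/2}}$, $n_{\mathcal S}=\sum_{l\in\mathcal S}n_l$, $\alpha_l=n_l/(n_{\mathcal S}+n_0)$. Assume the $L_{T^{(l)}}$ share a common eigenbasis $\{\phi_j\}$ with eigenvalues $s_j^{(l)}$, $s_j^{(0)}\asymp j^{-2r}$ with $r>1/2$, and $c\,s_j^{(0)}\le\sum_{l\in\mathcal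 S^*}\alpha_ls_j^{(l)}$, $s_j^{(l)}\le Cs_j^{(0)}$ for constants $c,C>0$ independent of $j,n$. *)

theory Defs
  imports "HOL-Probability.Probability"
begin

text \<open>Functional calculus for a self-adjoint operator that is diagonal in the orthonormal
basis phi with eigenvalues s: its v-th power acts as
x maps to sum over j of (s j powr v) times (x inner phi j) times phi j.\<close>
definition op_powr_eig :: "(nat \<Rightarrow> 'a::real_inner) \<Rightarrow> (nat \<Rightarrow> real) \<Rightarrow> real \<Rightarrow> 'a \<Rightarrow> 'a" where
  "op_powr_eig \<phi> s v x = (\<Sum>j. (s j powr v * (x \<bullet> \<phi> j)) *\<^sub>R \<phi> j)"

end

theory Submission
  imports Defs
begin



lemma fin_inner:
  fixes \<phi> :: "nat \<Rightarrow> 'a::real_inner"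
  assumes on: "\<forall>j k. \<phi> j \<bullet> \<phi> k = (if j = k then 1 else 0)" and F: "finite F"
  shows "(\<Sum>j\<in>F. b j *\<^sub>R \<phi> j) \<bullet> \<phi> k = (if k \<in> F then b k else 0)"
proof -
  have "(\<Sum>j\<in>F. b j *\<^sub>R \<phi> j) \<bullet> \<phi> k = (\<Sum>j\<in>F. b j * (if j = k then 1 else 0))"
    by (simp add: inner_sum_left on)
  also have "\<dots> = (if k \<in> F then b k else 0)"
    using F by (simp add: if_distrib sum.delta' cong: if_cong)
  finally show ?thesis .
qed

lemma fin_norm:
  fixes \<phi> :: "nat \<Rightarrow> 'a::real_inner"
  assumes on: "\<forall>j k. \<phi> j \<bullet> \<phi> k = (if j = k then 1 else 0)" and F: "finite F"
  shows "(norm (\<Sum>j\<in>F. b j *\<^sub>R \<phi> j))\<^sup>2 = (\<Sum>j\<in>F. (b j)\<^sup>2)"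
proof -
  have "(norm (\<Sum>j\<in>F. b j *\<^sub>R \<phi> j))\<^sup>2 = (\<Sum>j\<in>F. b j *\<^sub>R \<phi> j) \<bullet> (\<Sum>j\<in>F. b j *\<^sub>R \<phi> j)"
    by (simp add: power2_norm_eq_inner)
  also have "\<dots> = (\<Sum>j\<in>F. b j * (\<phi> j \<bullet> (\<Sum>k\<in>F. b k *\<^sub>R \<phi> k)))"
    by (simp add: inner_sum_left)
  also have "\<dots> = (\<Sum>j\<in>F. (b j)\<^sup>2)"
    using fin_inner[OF on F, of b] by (intro sum.cong) (auto simp: inner_commute power2_eq_square)
  finally show ?thesis .
qed

lemma bessel:
  fixes \<phi> :: "nat \<Rightarrow> 'a::real_inner"
  assumes on: "\<forall>j k. \<phi> j \<bullet> \<phi> k = (if j = k then 1 else 0)"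
  shows "(\<Sum>j<n. (y \<bullet> \<phi> j)\<^sup>2) \<le> (norm y)\<^sup>2"
proof -
  define P where "P = (\<Sum>j<n. (y \<bullet> \<phi> j) *\<^sub>R \<phi> j)"
  have nP: "(norm P)\<^sup>2 = (\<Sum>j<n. (y \<bullet> \<phi> j)\<^sup>2)"
    unfolding P_def by (rule fin_norm[OF on]) simp
  have yP: "y \<bullet> P = (\<Sum>j<n. (y \<bullet> \<phi> j)\<^sup>2)"
    unfolding P_def by (simp add: inner_sum_right power2_eq_square)
  have "0 \<le> (norm (y - P))\<^sup>2" by simp
  also have "\<dots> = (norm y)\<^sup>2 - 2 * (y \<bullet> P) + (norm P)\<^sup>2"
    by (simp add: power2_norm_eq_inner inner_diff_left inner_diff_right inner_commute)
  finally show ?thesis using nP yP by simp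
qed

lemma bessel_summable:
  fixes \<phi> :: "nat \<Rightarrow> 'a::real_inner"
  assumes on: "\<forall>j k. \<phi> j \<bullet> \<phi> k = (if j = k then 1 else 0)"
  shows "summable (\<lambda>j. (y \<bullet> \<phi> j)\<^sup>2)"
  by (rule summableI_nonneg_bounded[where x="(norm y)\<^sup>2"]) (auto intro: bessel[OF on])

lemma ortho_zero:
  fixes \<phi> :: "nat \<Rightarrow> 'a::real_inner"
  assumes comp: "closure (span (range \<phi>)) = UNIV" and z: "\<forall>k. z \<bullet> \<phi> k = 0"
  shows "z = 0"
proof -
  have sub: "subspace {w. z \<bullet> w = 0}"
    by (auto simp: subspace_def inner_add_right)
  have "span (range \<phi>) \<subseteq> {w. z \<bullet> w = 0}"
    using z by (intro span_minimal sub) auto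
  moreover have "closed {w. z \<bullet> w = 0}"
    by (intro closed_Collect_eq continuous_intros)
  ultimately have "closure (span (range \<phi>)) \<subseteq> {w. z \<bullet> w = 0}"
    by (rule closure_minimal)
  then have "z \<in> {w. z \<bullet> w = 0}" using comp by blast
  then show ?thesis by simp
qed

lemma sq_summable_conv:
  fixes \<phi> :: "nat \<Rightarrow> 'a::{real_inner,complete_space}"
  assumes on: "\<forall>j k. \<phi> j \<bullet> \<phi> k = (if j = k then 1 else 0)"
    and b: "summable (\<lambda>j. (b j)\<^sup>2)"
  shows "summable (\<lambda>j. b j *\<^sub>R \<phi> j)"
    and "(\<Sum>j. b j *\<^sub>R \<phi> j) \<bullet> \<phi> k = b k"
    and "(norm (\<Sum>j. b j *\<^sub>R \<phi> j))\<^sup>2 = (\<Sum>j. (b j)\<^sup>2)"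
proof -
  define S where "S n = (\<Sum>j<n. b j *\<^sub>R \<phi> j)" for n
  have diff: "dist (S m) (S n) = sqrt (\<Sum>j\<in>{m..<n}. (b j)\<^sup>2)" if "m \<le> n" for m n
  proof -
    have "S n - S m = (\<Sum>j\<in>{m..<n}. b j *\<^sub>R \<phi> j)"
      unfolding S_def using that by (metis sum_diff_nat_ivl atLeast0LessThan le0)
    then have "(norm (S n - S m))\<^sup>2 = (\<Sum>j\<in>{m..<n}. (b j)\<^sup>2)"
      using fin_norm[OF on, of "{m..<n}" b] by simp
    then show ?thesis by (simp add: dist_norm norm_minus_commute real_sqrt_unique)
  qed
  have "Cauchy S"
  proof (rule metric_CauchyI)
    fix e :: real assume e: "e > 0"
    then have "e\<^sup>2 > 0" by simp
    from b[unfolded summable_Cauchy, rule_format, OF this] obtain N where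
      N: "\<And>m n. m \<ge> N \<Longrightarrow> norm (\<Sum>j\<in>{m..<n}. (b j)\<^sup>2) < e\<^sup>2" by blast
    have "dist (S m) (S n) < e" if "m \<ge> N" "n \<ge> N" for m n
    proof (cases "m \<le> n")
      case True
      have "(\<Sum>j\<in>{m..<n}. (b j)\<^sup>2) < e\<^sup>2" using N[OF that(1), of n] by simp
      then have "sqrt (\<Sum>j\<in>{m..<n}. (b j)\<^sup>2) < sqrt (e\<^sup>2)"
        by (rule real_sqrt_less_mono)
      then have "sqrt (\<Sum>j\<in>{m..<n}. (b j)\<^sup>2) < e" using e by simp
      then show ?thesis using diff[OF True] by simp
    next
      case False
      have "(\<Sum>j\<in>{n..<m}. (b j)\<^sup>2) < e\<^sup>2" using N[OF that(2), of m] by simp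
      then have "sqrt (\<Sum>j\<in>{n..<m}. (b j)\<^sup>2) < sqrt (e\<^sup>2)"
        by (rule real_sqrt_less_mono)
      then have "sqrt (\<Sum>j\<in>{n..<m}. (b j)\<^sup>2) < e" using e by simp
      then show ?thesis using diff[of n m] False by (simp add: dist_commute)
    qed
    then show "\<exists>M. \<forall>m\<ge>M. \<forall>n\<ge>M. dist (S m) (S n) < e" by blast
  qed
  then have "convergent S" by (rule Cauchy_convergent)
  then show sm: "summable (\<lambda>j. b j *\<^sub>R \<phi> j)"
    unfolding S_def by (simp add: summable_iff_convergent)
  have inn: "(\<Sum>j. b j *\<^sub>R \<phi> j) \<bullet> v = (\<Sum>j. b j * (\<phi> j \<bullet> v))" for v
    using bounded_linear.suminf[OF bounded_linear_inner_left sm, of v] by simp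
  have co: "(\<Sum>j. b j *\<^sub>R \<phi> j) \<bullet> \<phi> k = b k" for k
  proof -
    have "(\<lambda>j. b j * (\<phi> j \<bullet> \<phi> k)) = (\<lambda>j. if j = k then b j else 0)"
      using on by auto
    then have "(\<Sum>j. b j * (\<phi> j \<bullet> \<phi> k)) = b k"
      using sums_single[of k b] by (simp add: sums_iff)
    then show ?thesis using inn by simp
  qed
  then show "(\<Sum>j. b j *\<^sub>R \<phi> j) \<bullet> \<phi> k = b k" .
  have "(\<Sum>j. b j * (\<phi> j \<bullet> (\<Sum>j. b j *\<^sub>R \<phi> j))) = (\<Sum>j. (b j)\<^sup>2)"
    using co by (simp add: inner_commute power2_eq_square)
  then show "(norm (\<Sum>j. b j *\<^sub>R \<phi> j))\<^sup>2 = (\<Sum>j. (b j)\<^sup>2)"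
    using inn by (simp add: power2_norm_eq_inner)
qed



lemma tail_term:
  fixes q x :: real
  assumes q: "q > 1" and x: "x \<ge> 2"
  shows "x powr (-q) \<le> ((x-1) powr (1-q) - x powr (1-q)) / (q-1)"
proof -
  define h where "h = 1/x"
  have h: "0 < h" "h < 1" using x by (auto simp: h_def)
  have "ln (1-h) \<le> (1-h) - 1" using h by (intro ln_le_minus_one) auto
  then have "(q-1)*(h + ln(1-h)) \<le> 0" using q by (intro mult_nonneg_nonpos) auto
  then have "1 + (q-1)*h \<le> 1 - (q-1) * ln (1-h)"
    by (simp add: algebra_simps)
  also have "\<dots> \<le> exp ((1-q) * ln (1-h))"
    using exp_ge_add_one_self[of "(1-q) * ln (1-h)"] by (simp add: algebra_simps)
  also have "\<dots> = (1-h) powr (1-q)" using h by (simp add: powr_def algebra_simps)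
  finally have b: "1 + (q-1)*h \<le> (1-h) powr (1-q)" .
  have "x - 1 = x * (1-h)" using x by (simp add: h_def field_simps)
  then have "(x-1) powr (1-q) = x powr (1-q) * (1-h) powr (1-q)"
    using x h by (simp add: powr_mult)
  moreover have "x powr (1-q) * (1 + (q-1)*h) = x powr (1-q) + (q-1) * x powr (-q)"
    using x by (simp add: h_def algebra_simps powr_diff powr_minus divide_simps)
  moreover have "x powr (1-q) * (1 + (q-1)*h) \<le> x powr (1-q) * (1-h) powr (1-q)"
    using b by (intro mult_left_mono) auto
  ultimately have "(q-1) * x powr (-q) \<le> (x-1) powr (1-q) - x powr (1-q)" by linarith
  then show ?thesis using q by (simp add: field_simps)
qed

lemma tail_sum:
  fixes q :: real
  assumes q: "q > 1" and m: "m \<ge> (1::nat)"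
  shows "summable (\<lambda>k. real (k+m+1) powr (-q))"
    and "(\<Sum>k. real (k+m+1) powr (-q)) \<le> real m powr (1-q) / (q-1)"
proof -
  have ps: "(\<Sum>k<n. real (k+m+1) powr (-q)) \<le> (real m powr (1-q) - real (n+m) powr (1-q)) / (q-1)" for n
  proof (induction n)
    case 0 then show ?case by simp
  next
    case (Suc n)
    have "real (n+m+1) powr (-q) \<le> ((real (n+m+1) - 1) powr (1-q) - real (n+m+1) powr (1-q)) / (q-1)"
      using m by (intro tail_term q) auto
    then have "real (n+m+1) powr (-q) \<le> (real (n+m) powr (1-q) - real (Suc n+m) powr (1-q)) / (q-1)"
      by (simp add: add.commute)
    with Suc show ?case using q by (simp add: field_simps)
  qed
  have le: "(\<Sum>k<n. real (k+m+1) powr (-q)) \<le> real m powr (1-q) / (q-1)" for n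
  proof -
    have "real (n+m) powr (1-q) \<ge> 0" by simp
    then show ?thesis using ps[of n] q by (smt (verit) divide_right_mono)
  qed
  show sm: "summable (\<lambda>k. real (k+m+1) powr (-q))"
    by (rule summableI_nonneg_bounded[OF _ le]) simp
  show "(\<Sum>k. real (k+m+1) powr (-q)) \<le> real m powr (1-q) / (q-1)"
    by (rule suminf_le_const[OF sm le])
qed

lemma sum_bound:
  fixes g :: "nat \<Rightarrow> real" and J p q K1 K2 :: real
  assumes J: "J \<ge> 1" and p: "p \<ge> 0" and q: "q > 1" and K: "K1 \<ge> 0" "K2 \<ge> 0"
    and g0: "\<And>j. 0 \<le> g j"
    and g1: "\<And>j. g j \<le> K1 * real (j+1) powr p"
    and g2: "\<And>j. g j \<le> K2 * J powr (p+q) * real (j+1) powr (-q)"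
  shows "summable g" and "suminf g \<le> (K1 + K2 * 2 powr (q-1) / (q-1)) * J powr (p+1)"
proof -
  define m where "m = nat \<lfloor>J\<rfloor>"
  have mJ: "real m \<le> J" using J by (simp add: m_def)
  have m1: "m \<ge> 1" using J by (simp add: m_def le_nat_floor)
  have mJ2: "J / 2 \<le> real m"
  proof -
    have "J < real m + 1" using J by (simp add: m_def)
    then show ?thesis using m1 by simp
  qed
  define f where "f j = (if j < m then K1 * J powr p else K2 * J powr (p+q) * real (j+1) powr (-q))" for j
  have gf: "g j \<le> f j" for j
  proof (cases "j < m")
    case True
    then have "real (j+1) \<le> J" using mJ by linarith
    then have "real (j+1) powr p \<le> J powr p" using p by (intro powr_mono2) auto
    then have "K1 * real (j+1) powr p \<le> K1 * J powr p" using K by (intro mult_left_mono) auto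
    then show ?thesis using g1[of j] True by (simp add: f_def)
  next
    case False then show ?thesis using g2[of j] by (simp add: f_def)
  qed
  have shift: "(\<lambda>k. f (k+m)) = (\<lambda>k. K2 * J powr (p+q) * real (k+m+1) powr (-q))"
    by (auto simp: f_def fun_eq_iff)
  have smf': "summable (\<lambda>k. f (k+m))"
    unfolding shift by (intro summable_mult tail_sum(1)[OF q m1])
  then have smf: "summable f" by (simp add: summable_iff_shift)
  show smg: "summable g"
    by (rule summable_comparison_test[OF _ smf]) (use g0 gf in auto)
  have "suminf g \<le> suminf f" by (rule suminf_le[OF gf smg smf])
  also have "suminf f = (\<Sum>k. f (k+m)) + (\<Sum>i<m. f i)"
    by (rule suminf_split_initial_segment[OF smf])
  finally have s1: "suminf g \<le> (\<Sum>k. f (k+m)) + (\<Sum>i<m. f i)" .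
  have s2: "(\<Sum>i<m. f i) = real m * (K1 * J powr p)" by (simp add: f_def)
  have s3: "(\<Sum>k. f (k+m)) = K2 * J powr (p+q) * (\<Sum>k. real (k+m+1) powr (-q))"
    unfolding shift by (intro suminf_mult tail_sum(1)[OF q m1])
  have s4: "(\<Sum>k. real (k+m+1) powr (-q)) \<le> real m powr (1-q) / (q-1)"
    by (rule tail_sum(2)[OF q m1])
  have s5: "real m powr (1-q) \<le> (J/2) powr (1-q)"
    using q mJ2 J by (intro powr_mono2') auto
  have "2 powr (q-1) * 2 powr (1-q) = 1" by (simp add: powr_add[symmetric])
  then have s6: "(J/2) powr (1-q) = J powr (1-q) * 2 powr (q-1)"
    using J by (simp add: powr_divide field_simps)
  have s7: "real m * (K1 * J powr p) \<le> J * (K1 * J powr p)"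
    using mJ K by (intro mult_right_mono) auto
  have "(\<Sum>k. real (k+m+1) powr (-q)) \<le> J powr (1-q) * 2 powr (q-1) / (q-1)"
  proof -
    have "real m powr (1-q) / (q-1) \<le> (J/2) powr (1-q) / (q-1)"
      using s5 q by (intro divide_right_mono) auto
    then show ?thesis using s4 s6 by simp
  qed
  then have "(\<Sum>k. f (k+m)) \<le> K2 * J powr (p+q) * (J powr (1-q) * 2 powr (q-1) / (q-1))"
    unfolding s3 using K by (intro mult_left_mono) auto
  then have "suminf g \<le> K2 * J powr (p+q) * (J powr (1-q) * 2 powr (q-1) / (q-1)) + J * (K1 * J powr p)"
    using s1 s2 s7 by linarith
  also have "\<dots> = (K1 + K2 * 2 powr (q-1) / (q-1)) * J powr (p+1)"
  proof -
    have e1: "J powr (p+q) * J powr (1-q) = J powr (p+1)" using J by (simp add: powr_add[symmetric])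
    have e2: "J * J powr p = J powr (p+1)" using J by (simp add: powr_add)
    have "K2 * J powr (p+q) * (J powr (1-q) * 2 powr (q-1) / (q-1)) = K2 * 2 powr (q-1) / (q-1) * (J powr (p+q) * J powr (1-q))"
      by (simp add: field_simps)
    also have "\<dots> = K2 * 2 powr (q-1) / (q-1) * J powr (p+1)" using e1 by simp
    finally have h1: "K2 * J powr (p+q) * (J powr (1-q) * 2 powr (q-1) / (q-1)) = K2 * 2 powr (q-1) / (q-1) * J powr (p+1)" .
    have h2: "J * (K1 * J powr p) = K1 * J powr (p+1)" using e2 by (simp add: mult.left_commute)
    show ?thesis unfolding h1 h2 by (simp add: distrib_right)
  qed
  finally show "suminf g \<le> (K1 + K2 * 2 powr (q-1) / (q-1)) * J powr (p+1)" .
qed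



lemma var_sum:
  fixes W :: "'i \<Rightarrow> 'w \<Rightarrow> real"
  assumes M: "prob_space M" and I: "finite I"
    and ind: "prob_space.indep_vars M (\<lambda>_. borel) W I"
    and int1: "\<And>p. p\<in>I \<Longrightarrow> integrable M (W p)"
    and mean0: "\<And>p. p\<in>I \<Longrightarrow> integral\<^sup>L M (W p) = 0"
    and int2: "\<And>p. p\<in>I \<Longrightarrow> integrable M (\<lambda>\<omega>. (W p \<omega>)\<^sup>2)"
  shows "integrable M (\<lambda>\<omega>. (\<Sum>p\<in>I. W p \<omega>)\<^sup>2)"
    and "integral\<^sup>L M (\<lambda>\<omega>. (\<Sum>p\<in>I. W p \<omega>)\<^sup>2) = (\<Sum>p\<in>I. integral\<^sup>L M (\<lambda>\<omega>. (W p \<omega>)\<^sup>2))"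
proof -
  interpret prob_space M by (rule M)
  have pq: "integrable M (\<lambda>\<omega>. W p \<omega> * W q \<omega>) \<and>
            integral\<^sup>L M (\<lambda>\<omega>. W p \<omega> * W q \<omega>) = (if p = q then integral\<^sup>L M (\<lambda>\<omega>. (W p \<omega>)\<^sup>2) else 0)"
    if "p \<in> I" "q \<in> I" for p q
  proof (cases "p = q")
    case True then show ?thesis using int2[OF that(1)] by (simp add: power2_eq_square)
  next
    case False
    have ind2: "indep_vars (\<lambda>_. borel) W {p,q}"
      by (rule indep_vars_subset[OF ind]) (use that in auto)
    have e: "(\<lambda>\<omega>. \<Prod>i\<in>{p,q}. W i \<omega>) = (\<lambda>\<omega>. W p \<omega> * W q \<omega>)" using False by auto
    have "integrable M (\<lambda>\<omega>. \<Prod>i\<in>{p,q}. W i \<omega>)"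
      by (rule indep_vars_integrable[OF _ ind2]) (use that int1 in auto)
    moreover have "integral\<^sup>L M (\<lambda>\<omega>. \<Prod>i\<in>{p,q}. W i \<omega>) = (\<Prod>i\<in>{p,q}. integral\<^sup>L M (W i))"
      by (rule indep_vars_lebesgue_integral[OF _ ind2]) (use that int1 in auto)
    ultimately show ?thesis using e False mean0 that by simp
  qed
  have sq: "(\<lambda>\<omega>. (\<Sum>p\<in>I. W p \<omega>)\<^sup>2) = (\<lambda>\<omega>. \<Sum>p\<in>I. \<Sum>q\<in>I. W p \<omega> * W q \<omega>)"
    by (simp add: power2_eq_square sum_product)
  show "integrable M (\<lambda>\<omega>. (\<Sum>p\<in>I. W p \<omega>)\<^sup>2)"
    unfolding sq by (rule Bochner_Integration.integrable_sum, rule Bochner_Integration.integrable_sum) (use pq in blast)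
  have "integral\<^sup>L M (\<lambda>\<omega>. \<Sum>p\<in>I. \<Sum>q\<in>I. W p \<omega> * W q \<omega>) = (\<Sum>p\<in>I. \<Sum>q\<in>I. integral\<^sup>L M (\<lambda>\<omega>. W p \<omega> * W q \<omega>))"
    by (subst Bochner_Integration.integral_sum, rule Bochner_Integration.integrable_sum, use pq in blast,
        intro sum.cong refl Bochner_Integration.integral_sum, use pq in blast)
  also have "\<dots> = (\<Sum>p\<in>I. \<Sum>q\<in>I. if p = q then integral\<^sup>L M (\<lambda>\<omega>. (W p \<omega>)\<^sup>2) else 0)"
    using pq by (intro sum.cong) auto
  also have "\<dots> = (\<Sum>p\<in>I. integral\<^sup>L M (\<lambda>\<omega>. (W p \<omega>)\<^sup>2))"
    using I by (simp add: sum.delta)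
  finally show "integral\<^sup>L M (\<lambda>\<omega>. (\<Sum>p\<in>I. W p \<omega>)\<^sup>2) = (\<Sum>p\<in>I. integral\<^sup>L M (\<lambda>\<omega>. (W p \<omega>)\<^sup>2))"
    unfolding sq .
qed



lemma g_bounds:
  fixes S s0 lam c C c1 c2 r \<nu> x :: real
  assumes c: "c > 0" and C: "C > 0" and lam: "lam > 0" and Sl: "c * s0 \<le> S" and Su: "S \<le> C * s0"
    and s0l: "c1 * x powr (-2*r) \<le> s0" and s0u: "s0 \<le> c2 * x powr (-2*r)"
    and c12: "c1 > 0" "c2 > 0" and nu: "0 \<le> \<nu>" "\<nu> \<le> 1/2" and x: "x \<ge> 1"
  shows "0 \<le> s0 powr (2*\<nu>) * S / (S+lam)\<^sup>2"
    and "s0 powr (2*\<nu>) * S / (S+lam)\<^sup>2 \<le> c1 powr (2*\<nu>-1) / c * x powr (2*r*(1-2*\<nu>))"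
    and "s0 powr (2*\<nu>) * S / (S+lam)\<^sup>2 \<le> C * c2 powr (2*\<nu>+1) * x powr (-(2*r*(1+2*\<nu>))) / lam\<^sup>2"
proof -
  have xp: "x powr (-2*r) > 0" using x by simp
  have s0p: "s0 > 0" using s0l xp c12 by (smt (verit) mult_pos_pos)
  have Sp: "S > 0" using Sl c s0p by (smt (verit) mult_pos_pos)
  show "0 \<le> s0 powr (2*\<nu>) * S / (S+lam)\<^sup>2" using Sp by simp
  have "S / (S+lam)\<^sup>2 \<le> S / S\<^sup>2"
    using Sp lam by (intro divide_left_mono power_mono) auto
  also have "\<dots> = 1 / S" using Sp by (simp add: power2_eq_square)
  also have "\<dots> \<le> 1 / (c * s0)" using Sl c s0p Sp by (intro divide_left_mono) auto
  finally have a1: "S / (S+lam)\<^sup>2 \<le> 1 / (c * s0)" .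
  have "s0 powr (2*\<nu>) * S / (S+lam)\<^sup>2 \<le> s0 powr (2*\<nu>) * (1 / (c * s0))"
    using a1 by (simp add: mult_left_mono times_divide_eq_right[symmetric] del: times_divide_eq_right)
  also have "\<dots> = s0 powr (2*\<nu>-1) / c"
    using s0p by (simp add: powr_diff)
  also have "s0 powr (2*\<nu>-1) \<le> (c1 * x powr (-2*r)) powr (2*\<nu>-1)"
    using nu s0l c12 xp by (intro powr_mono2') auto
  also have "(c1 * x powr (-2*r)) powr (2*\<nu>-1) = c1 powr (2*\<nu>-1) * x powr (2*r*(1-2*\<nu>))"
    using c12 x by (simp add: powr_mult powr_powr algebra_simps)
  finally show "s0 powr (2*\<nu>) * S / (S+lam)\<^sup>2 \<le> c1 powr (2*\<nu>-1) / c * x powr (2*r*(1-2*\<nu>))"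
    using c by (simp add: divide_right_mono)
  have "S / (S+lam)\<^sup>2 \<le> S / lam\<^sup>2"
    using Sp lam by (intro divide_left_mono power_mono) auto
  also have "\<dots> \<le> C * s0 / lam\<^sup>2" using Su lam by (intro divide_right_mono) auto
  finally have a2: "S / (S+lam)\<^sup>2 \<le> C * s0 / lam\<^sup>2" .
  have "s0 powr (2*\<nu>) * S / (S+lam)\<^sup>2 \<le> s0 powr (2*\<nu>) * (C * s0 / lam\<^sup>2)"
    using a2 by (simp add: mult_left_mono times_divide_eq_right[symmetric] del: times_divide_eq_right)
  also have "\<dots> = C * s0 powr (2*\<nu>+1) / lam\<^sup>2"
    using s0p by (simp add: powr_add)
  also have "s0 powr (2*\<nu>+1) \<le> (c2 * x powr (-2*r)) powr (2*\<nu>+1)"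
    using nu s0u s0p by (intro powr_mono2) auto
  also have "(c2 * x powr (-2*r)) powr (2*\<nu>+1) = c2 powr (2*\<nu>+1) * x powr (-(2*r*(1+2*\<nu>)))"
    using c12 x by (simp add: powr_mult powr_powr algebra_simps)
  finally show "s0 powr (2*\<nu>) * S / (S+lam)\<^sup>2 \<le> C * c2 powr (2*\<nu>+1) * x powr (-(2*r*(1+2*\<nu>))) / lam\<^sup>2"
    using C lam by (simp add: divide_right_mono mult_left_mono mult.assoc)
qed


lemma alg1:
  fixes a b n x y :: real
  assumes "n > 0"
  shows "a / b * (1/n)\<^sup>2 * (x * n * y) = x / n * (a * y / b)"
  using assms by (simp add: field_simps power2_eq_square)

lemma alg2:
  fixes k n x s :: real
  assumes "n > 0"
  shows "x * n * (k / n * s) = k * (x * s)"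
  using assms by (simp add: field_simps)

lemma L2_L1:
  fixes f :: "'w \<Rightarrow> real"
  assumes M: "prob_space M" and m: "f \<in> borel_measurable M" and i: "integrable M (\<lambda>\<omega>. (f \<omega>)\<^sup>2)"
  shows "integrable M f"
proof -
  interpret prob_space M by (rule M)
  have "integrable M (\<lambda>\<omega>. 1 + (f \<omega>)\<^sup>2)" using i by simp
  then show ?thesis
  proof (rule Bochner_Integration.integrable_bound[OF _ m])
    show "AE x in M. norm (f x) \<le> norm (1 + (f x)\<^sup>2)"
    proof (intro AE_I2)
      fix x
      have "\<bar>f x\<bar> \<le> 1 + (f x)\<^sup>2"
      proof (cases "\<bar>f x\<bar> \<le> 1")
        case True then show ?thesis by (smt (verit) zero_le_power2)
      next
        case False
        then have "\<bar>f x\<bar> * 1 \<le> \<bar>f x\<bar> * \<bar>f x\<bar>" by (intro mult_left_mono) auto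
        then show ?thesis by (simp add: power2_eq_square abs_mult_self_eq)
      qed
      then show "norm (f x) \<le> norm (1 + (f x)\<^sup>2)" by simp
    qed
  qed
qed
lemma pointwise:
  fixes \<phi> :: "nat \<Rightarrow> 'a::{real_inner,complete_space}" and T :: "nat \<Rightarrow> 'a \<Rightarrow> 'a"
    and s :: "nat \<Rightarrow> nat \<Rightarrow> real" and s0 :: "nat \<Rightarrow> real"
  assumes on: "\<forall>j k. \<phi> j \<bullet> \<phi> k = (if j = k then 1 else 0)"
    and comp: "closure (span (range \<phi>)) = UNIV"
    and Tsym: "\<And>l x k. l \<in> Sst \<Longrightarrow> T l x \<bullet> \<phi> k = s l k * (x \<bullet> \<phi> k)"
    and Spos: "\<And>j. 0 \<le> (\<Sum>l\<in>Sst. \<alpha> l * s l j)"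
    and lam: "lam > 0"
    and s0: "\<And>j. 0 < s0 j" "\<And>j. s0 j \<le> c2"
    and nu: "\<nu> \<ge> 0"
  shows "(norm (op_powr_eig \<phi> s0 \<nu> (inv (\<lambda>x. (\<Sum>l\<in>Sst. \<alpha> l *\<^sub>R T l x) + lam *\<^sub>R x) y)))\<^sup>2
           = (\<Sum>j. (s0 j powr \<nu> * ((y \<bullet> \<phi> j) / ((\<Sum>l\<in>Sst. \<alpha> l * s l j) + lam)))\<^sup>2)"
    and "summable (\<lambda>j. (s0 j powr \<nu> * ((y \<bullet> \<phi> j) / ((\<Sum>l\<in>Sst. \<alpha> l * s l j) + lam)))\<^sup>2)"
proof -
  define A where "A = (\<lambda>x. (\<Sum>l\<in>Sst. \<alpha> l *\<^sub>R T l x) + lam *\<^sub>R x)"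
  define \<mu> where "\<mu> j = (\<Sum>l\<in>Sst. \<alpha> l * s l j) + lam" for j
  have mu: "\<mu> j \<ge> lam" for j using Spos[of j] by (simp add: \<mu>_def)
  have Aco: "A x \<bullet> \<phi> k = \<mu> k * (x \<bullet> \<phi> k)" for x k
  proof -
    have "A x \<bullet> \<phi> k = (\<Sum>l\<in>Sst. \<alpha> l * (s l k * (x \<bullet> \<phi> k))) + lam * (x \<bullet> \<phi> k)"
      by (simp add: A_def inner_add_left inner_sum_left Tsym)
    also have "\<dots> = \<mu> k * (x \<bullet> \<phi> k)"
      by (simp add: \<mu>_def distrib_right sum_distrib_right mult.assoc)
    finally show ?thesis .
  qed
  have injA: "inj A"
  proof (rule injI)
    fix z z' assume "A z = A z'"
    then have "\<mu> k * (z \<bullet> \<phi> k) = \<mu> k * (z' \<bullet> \<phi> k)" for k using Aco by metis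
    then have "(z - z') \<bullet> \<phi> k = 0" for k
    proof -
      have "\<mu> k \<noteq> 0" using mu[of k] lam by simp
      then show ?thesis using \<open>\<And>k. \<mu> k * (z \<bullet> \<phi> k) = \<mu> k * (z' \<bullet> \<phi> k)\<close>[of k] by (simp add: inner_diff_left)
    qed
    then have "z - z' = 0" by (intro ortho_zero[OF comp]) auto
    then show "z = z'" by simp
  qed
  define b where "b j = (y \<bullet> \<phi> j) / \<mu> j" for j
  have bsq: "(b j)\<^sup>2 \<le> (y \<bullet> \<phi> j)\<^sup>2 / lam\<^sup>2" for j
  proof -
    have "\<bar>b j\<bar> \<le> \<bar>y \<bullet> \<phi> j\<bar> / lam"
      unfolding b_def using mu[of j] lam
      by (simp add: abs_divide) (intro divide_left_mono, auto)
    then have "\<bar>b j\<bar>\<^sup>2 \<le> (\<bar>y \<bullet> \<phi> j\<bar> / lam)\<^sup>2" by (intro power_mono) auto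
    then show ?thesis by (simp add: power_divide)
  qed
  have bsum: "summable (\<lambda>j. (b j)\<^sup>2)"
    by (rule summable_comparison_test[OF _ summable_divide[OF bessel_summable[OF on]]])
       (use bsq in auto)
  define x where "x = (\<Sum>j. b j *\<^sub>R \<phi> j)"
  have xco: "x \<bullet> \<phi> k = b k" for k unfolding x_def by (rule sq_summable_conv(2)[OF on bsum])
  have "A x = y"
  proof -
    have "(A x - y) \<bullet> \<phi> k = 0" for k
      using mu[of k] lam by (simp add: inner_diff_left Aco xco b_def)
    then have "A x - y = 0" by (intro ortho_zero[OF comp]) auto
    then show ?thesis by simp
  qed
  then have invx: "inv A y = x" using inv_f_f[OF injA] by metis
  define d where "d j = s0 j powr \<nu> * b j" for j
  have dsq: "(d j)\<^sup>2 \<le> (c2 powr \<nu>)\<^sup>2 * (b j)\<^sup>2" for j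
  proof -
    have "s0 j powr \<nu> \<le> c2 powr \<nu>" using s0[of j] nu by (intro powr_mono2) (auto intro: less_imp_le)
    then have "(s0 j powr \<nu>)\<^sup>2 \<le> (c2 powr \<nu>)\<^sup>2" by (intro power_mono) auto
    then show ?thesis unfolding d_def power_mult_distrib by (intro mult_right_mono) auto
  qed
  have dsum: "summable (\<lambda>j. (d j)\<^sup>2)"
    by (rule summable_comparison_test[OF _ summable_mult[OF bsum]]) (use dsq in auto)
  have "op_powr_eig \<phi> s0 \<nu> x = (\<Sum>j. d j *\<^sub>R \<phi> j)"
    by (simp add: op_powr_eig_def xco d_def)
  then have "(norm (op_powr_eig \<phi> s0 \<nu> x))\<^sup>2 = (\<Sum>j. (d j)\<^sup>2)"
    using sq_summable_conv(3)[OF on dsum] by simp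
  then show "(norm (op_powr_eig \<phi> s0 \<nu> (inv (\<lambda>x. (\<Sum>l\<in>Sst. \<alpha> l *\<^sub>R T l x) + lam *\<^sub>R x) y)))\<^sup>2
           = (\<Sum>j. (s0 j powr \<nu> * ((y \<bullet> \<phi> j) / ((\<Sum>l\<in>Sst. \<alpha> l * s l j) + lam)))\<^sup>2)"
    using invx by (simp add: A_def d_def b_def \<mu>_def)
  show "summable (\<lambda>j. (s0 j powr \<nu> * ((y \<bullet> \<phi> j) / ((\<Sum>l\<in>Sst. \<alpha> l * s l j) + lam)))\<^sup>2)"
    using dsum by (simp add: d_def b_def \<mu>_def)
qed


theorem lemma3:
  fixes M :: "'w measure"
    and Sst :: "nat set"
    and X :: "nat \<Rightarrow> nat \<Rightarrow> 'w \<Rightarrow> 'a::{real_inner, complete_space}"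
    and eps :: "nat \<Rightarrow> nat \<Rightarrow> 'w \<Rightarrow> real"
    and sigma2 :: "nat \<Rightarrow> real"
    and Khalf :: "'a \<Rightarrow> 'a"
    and Cop :: "nat \<Rightarrow> 'a \<Rightarrow> 'a"
    and \<phi> :: "nat \<Rightarrow> 'a"
    and s :: "nat \<Rightarrow> nat \<Rightarrow> real"
    and r \<nu> c C :: real
  assumes M: "prob_space M"
    and Sst: "finite Sst" "0 \<in> Sst"
    and meas: "\<forall>l\<in>Sst. \<forall>i. X l i \<in> borel_measurable M \<and> eps l i \<in> borel_measurable M"
    and indep: "prob_space.indep_vars M (\<lambda>_. borel) (\<lambda>(l, i) \<omega>. (X l i \<omega>, eps l i \<omega>)) (Sst \<times> UNIV)"
    and indep_eps: "\<forall>l\<in>Sst. \<forall>i. prob_space.indep_set M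
                   (sigma_sets (space M) {X l i -` A \<inter> space M | A. A \<in> sets borel})
                   (sigma_sets (space M) {eps l i -` A \<inter> space M | A. A \<in> sets borel})"
    and X_L2: "\<forall>l\<in>Sst. \<forall>i. integrable M (\<lambda>\<omega>. (norm (X l i \<omega>))\<^sup>2)"
    and X_mean0: "\<forall>l\<in>Sst. \<forall>i. \<forall>f. integral\<^sup>L M (\<lambda>\<omega>. X l i \<omega> \<bullet> f) = 0"
    and X_cov: "\<forall>l\<in>Sst. \<forall>i. \<forall>f g.
                  integral\<^sup>L M (\<lambda>\<omega>. (X l i \<omega> \<bullet> f) * (X l i \<omega> \<bullet> g)) = Cop l f \<bullet> g"
    and eps_L2: "\<forall>l\<in>Sst. \<forall>i. integrable M (\<lambda>\<omega>. (eps l i \<omega>)\<^sup>2)"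
    and eps_mean0: "\<forall>l\<in>Sst. \<forall>i. integral\<^sup>L M (eps l i) = 0"
    and eps_var: "\<forall>l\<in>Sst. \<forall>i. integral\<^sup>L M (\<lambda>\<omega>. (eps l i \<omega>)\<^sup>2) = sigma2 l"
    and Khalf_lin: "bounded_linear Khalf"
    and Khalf_sa: "\<forall>x y. Khalf x \<bullet> y = x \<bullet> Khalf y"
    and basis_on: "\<forall>j k. \<phi> j \<bullet> \<phi> k = (if j = k then 1 else 0)"
    and basis_complete: "closure (span (range \<phi>)) = UNIV"
    and eig: "\<forall>l\<in>Sst. \<forall>j. Khalf (Cop l (Khalf (\<phi> j))) = s l j *\<^sub>R \<phi> j"
    and r: "r > 1/2"
    and s0_decay: "\<exists>c1 c2. c1 > 0 \<and> c2 > 0 \<and>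
                    (\<forall>j. c1 * (real j + 1) powr (-2*r) \<le> s 0 j \<and> s 0 j \<le> c2 * (real j + 1) powr (-2*r))"
    and c: "c > 0" and C: "C > 0"
    and s_upper: "\<forall>l\<in>Sst. \<forall>j. s l j \<le> C * s 0 j"
    and \<nu>: "0 \<le> \<nu>" "\<nu> \<le> 1/2"
  shows "\<forall>e>0. \<exists>B N0 lam0. lam0 > 0 \<and>
           (\<forall>(nl :: nat \<Rightarrow> nat) lam.
              let N = (\<Sum>l\<in>Sst. nl l); \<alpha> = (\<lambda>l. real (nl l) / real N) in
              (N \<ge> N0 \<and> (\<forall>j. c * s 0 j \<le> (\<Sum>l\<in>Sst. \<alpha> l * s l j)) \<and> 0 < lam \<and> lam \<le> lam0) \<longrightarrow>
              measure M {\<omega> \<in> space M.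
                 (norm (op_powr_eig \<phi> (s 0) \<nu>
                    (inv (\<lambda>x. (\<Sum>l\<in>Sst. \<alpha> l *\<^sub>R Khalf (Cop l (Khalf x))) + lam *\<^sub>R x)
                      ((1 / real N) *\<^sub>R (\<Sum>l\<in>Sst. \<Sum>i<nl l. eps l i \<omega> *\<^sub>R Khalf (X l i \<omega>))))))\<^sup>2
                 > B / (real N * lam powr (1 - 2*\<nu> + 1/(2*r)))} \<le> e)"
proof -
  interpret prob_space M by (rule M)
  obtain c1 c2 where c1: "c1 > 0" and c2: "c2 > 0"
    and s0b: "\<And>j. c1 * (real j + 1) powr (-2*r) \<le> s 0 j \<and> s 0 j \<le> c2 * (real j + 1) powr (-2*r)"
    using s0_decay by blast
  have s0pos: "0 < s 0 j" for j
  proof -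
    have "0 < c1 * (real j + 1) powr (-2*r)" using c1 by simp
    then show ?thesis using s0b[of j] by linarith
  qed
  have s0le: "s 0 j \<le> c2" for j
  proof -
    have "(real j + 1) powr (-2*r) \<le> (real j + 1) powr 0" using r by (intro powr_mono) auto
    then have "c2 * (real j + 1) powr (-2*r) \<le> c2" using c2 by (simp add: mult_left_le)
    then show ?thesis using s0b[of j] by linarith
  qed
  have sa: "x \<bullet> Khalf y = Khalf x \<bullet> y" for x y using Khalf_sa by simp
  have Tsym: "Khalf (Cop l (Khalf x)) \<bullet> \<phi> k = s l k * (x \<bullet> \<phi> k)" if l: "l \<in> Sst" for l x k
  proof -
    have "Khalf (Cop l (Khalf x)) \<bullet> \<phi> k = Cop l (Khalf x) \<bullet> Khalf (\<phi> k)" using Khalf_sa by simp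
    also have "\<dots> = integral\<^sup>L M (\<lambda>\<omega>. (X l 0 \<omega> \<bullet> Khalf x) * (X l 0 \<omega> \<bullet> Khalf (\<phi> k)))"
      using X_cov l by simp
    also have "\<dots> = integral\<^sup>L M (\<lambda>\<omega>. (X l 0 \<omega> \<bullet> Khalf (\<phi> k)) * (X l 0 \<omega> \<bullet> Khalf x))"
      by (simp add: mult.commute)
    also have "\<dots> = Cop l (Khalf (\<phi> k)) \<bullet> Khalf x" using X_cov l by simp
    also have "\<dots> = Khalf (Cop l (Khalf (\<phi> k))) \<bullet> x" by (rule sa)
    also have "\<dots> = s l k * (x \<bullet> \<phi> k)" using eig l by (simp add: inner_commute)
    finally show ?thesis .
  qed
  have V2E: "integral\<^sup>L M (\<lambda>\<omega>. (X l i \<omega> \<bullet> Khalf (\<phi> j))\<^sup>2) = s l j" if l: "l \<in> Sst" for l i j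
  proof -
    have "integral\<^sup>L M (\<lambda>\<omega>. (X l i \<omega> \<bullet> Khalf (\<phi> j))\<^sup>2) = Cop l (Khalf (\<phi> j)) \<bullet> Khalf (\<phi> j)"
      using X_cov l by (simp add: power2_eq_square)
    also have "\<dots> = Khalf (Cop l (Khalf (\<phi> j))) \<bullet> \<phi> j" by (rule sa)
    also have "\<dots> = s l j" using eig l basis_on by simp
    finally show ?thesis .
  qed
  have snn: "0 \<le> s l j" if "l \<in> Sst" for l j
    using V2E[OF that, of 0 j, symmetric] by simp
  have Xm: "(\<lambda>\<omega>. X l i \<omega> \<bullet> v) \<in> borel_measurable M" if "l \<in> Sst" for l i v
  proof -
    have "(\<lambda>x. x \<bullet> v) \<in> borel_measurable borel"
      by (intro borel_measurable_continuous_onI continuous_intros)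
    then show ?thesis using meas that by (intro measurable_compose[OF _ \<open>(\<lambda>x. x \<bullet> v) \<in> borel_measurable borel\<close>]) auto
  qed
  have em: "eps l i \<in> borel_measurable M" if "l \<in> Sst" for l i using meas that by auto
  have V2i: "integrable M (\<lambda>\<omega>. (X l i \<omega> \<bullet> v)\<^sup>2)" if l: "l \<in> Sst" for l i v
  proof -
    have "integrable M (\<lambda>\<omega>. (norm v)\<^sup>2 * (norm (X l i \<omega>))\<^sup>2)"
      by (intro integrable_mult_right) (use X_L2 l in auto)
    then show ?thesis
    proof (rule Bochner_Integration.integrable_bound)
      show "(\<lambda>\<omega>. (X l i \<omega> \<bullet> v)\<^sup>2) \<in> borel_measurable M" using Xm[OF l] by simp
      show "AE \<omega> in M. norm ((X l i \<omega> \<bullet> v)\<^sup>2) \<le> norm ((norm v)\<^sup>2 * (norm (X l i \<omega>))\<^sup>2)"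
      proof (intro AE_I2)
        fix \<omega>
        have "\<bar>X l i \<omega> \<bullet> v\<bar> \<le> norm (X l i \<omega>) * norm v" by (rule Cauchy_Schwarz_ineq2)
        then have "\<bar>X l i \<omega> \<bullet> v\<bar>\<^sup>2 \<le> (norm (X l i \<omega>) * norm v)\<^sup>2" by (intro power_mono) auto
        then show "norm ((X l i \<omega> \<bullet> v)\<^sup>2) \<le> norm ((norm v)\<^sup>2 * (norm (X l i \<omega>))\<^sup>2)"
          by (simp add: power_mult_distrib mult.commute)
      qed
    qed
  qed
  have Vi: "integrable M (\<lambda>\<omega>. X l i \<omega> \<bullet> v)" if "l \<in> Sst" for l i v
    by (rule L2_L1[OF M Xm[OF that] V2i[OF that]])
  have ei: "integrable M (\<lambda>\<omega>. eps l i \<omega>)" if "l \<in> Sst" for l i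
    using L2_L1[OF M em[OF that]] eps_L2 that by auto
  have ie: "indep_var borel (\<lambda>\<omega>. h1 (X l i \<omega>)) borel (\<lambda>\<omega>. h2 (eps l i \<omega>))"
    if "l \<in> Sst" "continuous_on UNIV h1" "continuous_on UNIV h2"
    for l i and h1 :: "'a \<Rightarrow> real" and h2 :: "real \<Rightarrow> real"
  proof -
    have hm1: "h1 \<in> borel_measurable borel" by (rule borel_measurable_continuous_onI[OF that(2)])
    have hm2: "h2 \<in> borel_measurable borel" by (rule borel_measurable_continuous_onI[OF that(3)])
    have sub1: "{(\<lambda>\<omega>. h1 (X l i \<omega>)) -` A \<inter> space M |A. A \<in> sets borel} \<subseteq> {X l i -` A \<inter> space M |A. A \<in> sets borel}"
    proof
      fix B assume "B \<in> {(\<lambda>\<omega>. h1 (X l i \<omega>)) -` A \<inter> space M |A. A \<in> sets borel}"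
      then obtain A where B: "B = (\<lambda>\<omega>. h1 (X l i \<omega>)) -` A \<inter> space M" and A: "A \<in> sets borel" by blast
      have "B = X l i -` (h1 -` A) \<inter> space M" using B by auto
      moreover have "h1 -` A \<in> sets borel" using measurable_sets[OF hm1 A] by simp
      ultimately show "B \<in> {X l i -` A \<inter> space M |A. A \<in> sets borel}" by blast
    qed
    have sub2: "{(\<lambda>\<omega>. h2 (eps l i \<omega>)) -` A \<inter> space M |A. A \<in> sets borel} \<subseteq> {eps l i -` A \<inter> space M |A. A \<in> sets borel}"
    proof
      fix B assume "B \<in> {(\<lambda>\<omega>. h2 (eps l i \<omega>)) -` A \<inter> space M |A. A \<in> sets borel}"
      then obtain A where B: "B = (\<lambda>\<omega>. h2 (eps l i \<omega>)) -` A \<inter> space M" and A: "A \<in> sets borel" by blast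
      have "B = eps l i -` (h2 -` A) \<inter> space M" using B by auto
      moreover have "h2 -` A \<in> sets borel" using measurable_sets[OF hm2 A] by simp
      ultimately show "B \<in> {eps l i -` A \<inter> space M |A. A \<in> sets borel}" by blast
    qed
    define SX where "SX = sigma_sets (space M) {X l i -` A \<inter> space M |A. A \<in> sets borel}"
    define SE where "SE = sigma_sets (space M) {eps l i -` A \<inter> space M |A. A \<in> sets borel}"
    define S1 where "S1 = sigma_sets (space M) {(\<lambda>\<omega>. h1 (X l i \<omega>)) -` A \<inter> space M |A. A \<in> sets borel}"
    define S2 where "S2 = sigma_sets (space M) {(\<lambda>\<omega>. h2 (eps l i \<omega>)) -` A \<inter> space M |A. A \<in> sets borel}"
    have s1: "S1 \<subseteq> SX" unfolding S1_def SX_def by (rule sigma_sets_subseteq[OF sub1])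
    have s2: "S2 \<subseteq> SE" unfolding S2_def SE_def by (rule sigma_sets_subseteq[OF sub2])
    have base: "indep_sets (case_bool SX SE) UNIV"
      using indep_eps that(1) unfolding indep_set_def SX_def SE_def by blast
    have "indep_sets (case_bool S1 S2) UNIV"
    proof (rule indep_sets_mono_sets[OF base])
      fix b :: bool show "case_bool S1 S2 b \<subseteq> case_bool SX SE b" using s1 s2 by (cases b) simp_all
    qed
    then have "indep_set S1 S2" unfolding indep_set_def .
    then have "indep_set (sigma_sets (space M) {(\<lambda>\<omega>. h1 (X l i \<omega>)) -` A \<inter> space M |A. A \<in> sets borel})
                    (sigma_sets (space M) {(\<lambda>\<omega>. h2 (eps l i \<omega>)) -` A \<inter> space M |A. A \<in> sets borel})"
      unfolding S1_def S2_def .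
    moreover have "random_variable borel (\<lambda>\<omega>. h1 (X l i \<omega>))"
      using meas that(1) by (intro measurable_compose[OF _ hm1]) auto
    moreover have "random_variable borel (\<lambda>\<omega>. h2 (eps l i \<omega>))"
      using meas that(1) by (intro measurable_compose[OF _ hm2]) auto
    ultimately show ?thesis by (simp add: indep_var_eq)
  qed
  have Wfacts: "integrable M (\<lambda>\<omega>. eps l i \<omega> * (X l i \<omega> \<bullet> v)) \<and> integral\<^sup>L M (\<lambda>\<omega>. eps l i \<omega> * (X l i \<omega> \<bullet> v)) = 0
     \<and> integrable M (\<lambda>\<omega>. (eps l i \<omega> * (X l i \<omega> \<bullet> v))\<^sup>2)
     \<and> integral\<^sup>L M (\<lambda>\<omega>. (eps l i \<omega> * (X l i \<omega> \<bullet> v))\<^sup>2) = sigma2 l * integral\<^sup>L M (\<lambda>\<omega>. (X l i \<omega> \<bullet> v)\<^sup>2)"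
    if l: "l \<in> Sst" for l i v
  proof -
    have cv: "continuous_on UNIV (\<lambda>x::'a. x \<bullet> v)" by (intro continuous_intros)
    have cv2: "continuous_on UNIV (\<lambda>x::'a. (x \<bullet> v)\<^sup>2)" by (intro continuous_intros)
    have ci: "continuous_on UNIV (\<lambda>e::real. e)" by (rule continuous_on_id)
    have ci2: "continuous_on UNIV (\<lambda>e::real. e\<^sup>2)" by (intro continuous_intros)
    have i1: "indep_var borel (\<lambda>\<omega>. X l i \<omega> \<bullet> v) borel (\<lambda>\<omega>. eps l i \<omega>)"
      using ie[OF l cv ci] .
    have i2: "indep_var borel (\<lambda>\<omega>. (X l i \<omega> \<bullet> v)\<^sup>2) borel (\<lambda>\<omega>. (eps l i \<omega>)\<^sup>2)"
      using ie[OF l cv2 ci2] .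
    have e1: "(\<lambda>\<omega>. eps l i \<omega> * (X l i \<omega> \<bullet> v)) = (\<lambda>\<omega>. (X l i \<omega> \<bullet> v) * eps l i \<omega>)"
      by (simp add: fun_eq_iff mult.commute)
    have e2: "(\<lambda>\<omega>. (eps l i \<omega> * (X l i \<omega> \<bullet> v))\<^sup>2) = (\<lambda>\<omega>. (X l i \<omega> \<bullet> v)\<^sup>2 * (eps l i \<omega>)\<^sup>2)"
      by (simp add: fun_eq_iff power_mult_distrib mult.commute)
    have a: "integrable M (\<lambda>\<omega>. (X l i \<omega> \<bullet> v) * eps l i \<omega>)"
      by (rule indep_var_integrable[OF i1 Vi[OF l] ei[OF l]])
    have b: "integral\<^sup>L M (\<lambda>\<omega>. (X l i \<omega> \<bullet> v) * eps l i \<omega>) = 0"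
      using indep_var_lebesgue_integral[OF i1 Vi[OF l] ei[OF l]] X_mean0 l by simp
    have c': "integrable M (\<lambda>\<omega>. (X l i \<omega> \<bullet> v)\<^sup>2 * (eps l i \<omega>)\<^sup>2)"
      by (rule indep_var_integrable[OF i2 V2i[OF l]]) (use eps_L2 l in auto)
    have d: "integral\<^sup>L M (\<lambda>\<omega>. (X l i \<omega> \<bullet> v)\<^sup>2 * (eps l i \<omega>)\<^sup>2) = sigma2 l * integral\<^sup>L M (\<lambda>\<omega>. (X l i \<omega> \<bullet> v)\<^sup>2)"
      using indep_var_lebesgue_integral[OF i2 V2i[OF l]] eps_L2 eps_var l by simp
    show ?thesis unfolding e1 e2 using a b c' d by simp
  qed
  define p where "p = 2*r*(1-2*\<nu>)"
  define q where "q = 2*r*(1+2*\<nu>)"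
  have p0: "p \<ge> 0" using r \<nu> by (simp add: p_def)
  have q1: "q > 1"
  proof -
    have "2*r*(1+2*\<nu>) \<ge> 2*r*1" using r \<nu> by (intro mult_left_mono) auto
    then show ?thesis using r unfolding q_def by linarith
  qed
  define \<sigma>M where "\<sigma>M = (\<Sum>l\<in>Sst. \<bar>sigma2 l\<bar>)"
  have \<sigma>M0: "\<sigma>M \<ge> 0" by (simp add: \<sigma>M_def sum_nonneg)
  have \<sigma>Ml: "sigma2 l \<le> \<sigma>M" if "l \<in> Sst" for l
  proof -
    have "\<bar>sigma2 l\<bar> \<le> \<sigma>M" unfolding \<sigma>M_def using member_le_sum[of l Sst "\<lambda>l. \<bar>sigma2 l\<bar>"] Sst(1) that by auto
    then show ?thesis by simp
  qed
  define K1 where "K1 = c1 powr (2*\<nu>-1) / c"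
  define K2 where "K2 = C * c2 powr (2*\<nu>+1)"
  define D where "D = K1 + K2 * 2 powr (q-1) / (q-1)"
  have K1: "K1 \<ge> 0" using c by (simp add: K1_def)
  have K2: "K2 \<ge> 0" using C by (simp add: K2_def)
  have D: "D \<ge> 0" using K1 K2 q1 by (simp add: D_def)
  show ?thesis
  proof (intro allI impI)
    fix e :: real assume e: "e > 0"
    define B where "B = \<sigma>M * D / e + 1"
    have "\<sigma>M * D / e \<ge> 0" using \<sigma>M0 D e by simp
    then have B: "B > 0" by (simp add: B_def)
    have BD: "\<sigma>M * D / B \<le> e"
    proof -
      have "\<sigma>M * D \<le> e * B" using e by (simp add: B_def field_simps)
      then show ?thesis using B by (simp add: divide_le_eq mult.commute)
    qed
    show "\<exists>B N0 lam0. lam0 > 0 \<and>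
           (\<forall>(nl :: nat \<Rightarrow> nat) lam.
              let N = (\<Sum>l\<in>Sst. nl l); \<alpha> = (\<lambda>l. real (nl l) / real N) in
              (N \<ge> N0 \<and> (\<forall>j. c * s 0 j \<le> (\<Sum>l\<in>Sst. \<alpha> l * s l j)) \<and> 0 < lam \<and> lam \<le> lam0) \<longrightarrow>
              measure M {\<omega> \<in> space M.
                 (norm (op_powr_eig \<phi> (s 0) \<nu>
                    (inv (\<lambda>x. (\<Sum>l\<in>Sst. \<alpha> l *\<^sub>R Khalf (Cop l (Khalf x))) + lam *\<^sub>R x)
                      ((1 / real N) *\<^sub>R (\<Sum>l\<in>Sst. \<Sum>i<nl l. eps l i \<omega> *\<^sub>R Khalf (X l i \<omega>))))))\<^sup>2
                 > B / (real N * lam powr (1 - 2*\<nu> + 1/(2*r)))} \<le> e)"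
    proof (rule exI[of _ B], rule exI[of _ "1::nat"], rule exI[of _ "1::real"], intro conjI allI)
      show "(1::real) > 0" by simp
      fix nl :: "nat \<Rightarrow> nat" and lam :: real
      define N where "N = (\<Sum>l\<in>Sst. nl l)"
      define \<alpha> where "\<alpha> = (\<lambda>l. real (nl l) / real N)"
      have main: "measure M {\<omega> \<in> space M.
                 (norm (op_powr_eig \<phi> (s 0) \<nu>
                    (inv (\<lambda>x. (\<Sum>l\<in>Sst. \<alpha> l *\<^sub>R Khalf (Cop l (Khalf x))) + lam *\<^sub>R x)
                      ((1 / real N) *\<^sub>R (\<Sum>l\<in>Sst. \<Sum>i<nl l. eps l i \<omega> *\<^sub>R Khalf (X l i \<omega>))))))\<^sup>2
                 > B / (real N * lam powr (1 - 2*\<nu> + 1/(2*r)))} \<le> e"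
        if N1: "N \<ge> 1" and Sc: "\<forall>j. c * s 0 j \<le> (\<Sum>l\<in>Sst. \<alpha> l * s l j)"
          and lam: "0 < lam" and lam1: "lam \<le> 1"
      proof -
        have Npos: "real N > 0" using N1 by simp
        have \<alpha>0: "\<alpha> l \<ge> 0" for l by (simp add: \<alpha>_def)
        have \<alpha>1: "(\<Sum>l\<in>Sst. \<alpha> l) = 1"
        proof -
          have "(\<Sum>l\<in>Sst. \<alpha> l) = (\<Sum>l\<in>Sst. real (nl l)) / real N"
            by (simp add: \<alpha>_def sum_divide_distrib)
          also have "\<dots> = real N / real N" by (simp add: N_def)
          finally show ?thesis using Npos by simp
        qed
        define S where "S j = (\<Sum>l\<in>Sst. \<alpha> l * s l j)" for j
        have Sl: "c * s 0 j \<le> S j" for j using Sc by (simp add: S_def)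
        have Snn: "0 \<le> (\<Sum>l\<in>Sst. \<alpha> l * s l j)" for j
        proof -
          have "0 < c * s 0 j" using c s0pos[of j] by simp
          then show ?thesis using Sl[of j] by (simp add: S_def)
        qed
        have Su: "S j \<le> C * s 0 j" for j
        proof -
          have "S j \<le> (\<Sum>l\<in>Sst. \<alpha> l * (C * s 0 j))"
            unfolding S_def using s_upper \<alpha>0 by (intro sum_mono mult_left_mono) auto
          also have "\<dots> = C * s 0 j" using \<alpha>1 by (simp add: sum_distrib_right[symmetric])
          finally show ?thesis .
        qed
        define y where "y \<omega> = (1 / real N) *\<^sub>R (\<Sum>l\<in>Sst. \<Sum>i<nl l. eps l i \<omega> *\<^sub>R Khalf (X l i \<omega>))" for \<omega>
        define Q where "Q \<omega> = (\<Sum>j. (s 0 j powr \<nu> * ((y \<omega> \<bullet> \<phi> j) / (S j + lam)))\<^sup>2)" for \<omega>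
        have Tsym': "\<And>l x k. l \<in> Sst \<Longrightarrow> Khalf (Cop l (Khalf x)) \<bullet> \<phi> k = s l k * (x \<bullet> \<phi> k)"
          using Tsym by blast
        note pwl = pointwise[OF basis_on basis_complete Tsym' Snn lam s0pos s0le \<nu>(1)]
        have pw: "(norm (op_powr_eig \<phi> (s 0) \<nu> (inv (\<lambda>x. (\<Sum>l\<in>Sst. \<alpha> l *\<^sub>R Khalf (Cop l (Khalf x))) + lam *\<^sub>R x) (y \<omega>))))\<^sup>2 = Q \<omega>"
          for \<omega> using pwl(1)[where y="y \<omega>"] by (simp add: Q_def S_def)
        have Qsum: "summable (\<lambda>j. (s 0 j powr \<nu> * ((y \<omega> \<bullet> \<phi> j) / (S j + lam)))\<^sup>2)" for \<omega>
          using pwl(2)[where y="y \<omega>"] by (simp add: S_def)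
        define I where "I = Sigma Sst (\<lambda>l. {..<nl l})"
        have Ifin: "finite I" using Sst(1) by (simp add: I_def)
        have Isub: "I \<subseteq> Sst \<times> UNIV" by (auto simp: I_def)
        define W where "W j pr \<omega> = eps (fst pr) (snd pr) \<omega> * (X (fst pr) (snd pr) \<omega> \<bullet> Khalf (\<phi> j))" for j pr \<omega>
        have yco: "y \<omega> \<bullet> \<phi> j = (1 / real N) * (\<Sum>pr\<in>I. W j pr \<omega>)" for \<omega> j
        proof -
          have "y \<omega> \<bullet> \<phi> j = (1 / real N) * (\<Sum>l\<in>Sst. \<Sum>i<nl l. eps l i \<omega> * (X l i \<omega> \<bullet> Khalf (\<phi> j)))"
            by (simp add: y_def inner_sum_left Khalf_sa)
          also have "\<dots> = (1 / real N) * (\<Sum>pr\<in>I. W j pr \<omega>)"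
            unfolding I_def W_def using Sst(1) by (subst sum.Sigma) (auto simp: split_beta)
          finally show ?thesis .
        qed
        have indW: "indep_vars (\<lambda>_. borel) (W j) I" for j
        proof -
          have cc: "continuous_on UNIV (\<lambda>z::'a \<times> real. snd z * (fst z \<bullet> Khalf (\<phi> j)))"
            by (intro continuous_intros)
          have "indep_vars (\<lambda>_. borel) (\<lambda>pr \<omega>. (\<lambda>z::'a \<times> real. snd z * (fst z \<bullet> Khalf (\<phi> j))) ((\<lambda>(l, i) \<omega>. (X l i \<omega>, eps l i \<omega>)) pr \<omega>)) I"
            by (rule indep_vars_compose2[OF indep_vars_subset[OF indep Isub]])
               (rule borel_measurable_continuous_onI[OF cc])
          then show ?thesis
            using indep_vars_cong[of I I "\<lambda>pr \<omega>. (\<lambda>z::'a \<times> real. snd z * (fst z \<bullet> Khalf (\<phi> j))) ((\<lambda>(l, i) \<omega>. (X l i \<omega>, eps l i \<omega>)) pr \<omega>)" "W j" "\<lambda>_. borel" "\<lambda>_. borel"]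
            by (auto simp: W_def split_beta fun_eq_iff)
        qed
        have Wpr: "integrable M (W j pr) \<and> integral\<^sup>L M (W j pr) = 0 \<and>
                   integrable M (\<lambda>\<omega>. (W j pr \<omega>)\<^sup>2) \<and> integral\<^sup>L M (\<lambda>\<omega>. (W j pr \<omega>)\<^sup>2) = sigma2 (fst pr) * s (fst pr) j"
          if "pr \<in> I" for j pr
        proof -
          have l: "fst pr \<in> Sst" using that by (auto simp: I_def)
          have eq: "W j pr = (\<lambda>\<omega>. eps (fst pr) (snd pr) \<omega> * (X (fst pr) (snd pr) \<omega> \<bullet> Khalf (\<phi> j)))"
            by (simp add: W_def fun_eq_iff)
          show ?thesis unfolding eq using Wfacts[OF l, of "snd pr" "Khalf (\<phi> j)"] V2E[OF l] by simp
        qed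
        have Ea: "integrable M (\<lambda>\<omega>. (\<Sum>pr\<in>I. W j pr \<omega>)\<^sup>2) \<and>
                  integral\<^sup>L M (\<lambda>\<omega>. (\<Sum>pr\<in>I. W j pr \<omega>)\<^sup>2) = (\<Sum>l\<in>Sst. real (nl l) * (sigma2 l * s l j))" for j
        proof -
          have v1: "integrable M (\<lambda>\<omega>. (\<Sum>pr\<in>I. W j pr \<omega>)\<^sup>2)"
            by (rule var_sum(1)[OF M Ifin indW]) (use Wpr in auto)
          have v2: "integral\<^sup>L M (\<lambda>\<omega>. (\<Sum>pr\<in>I. W j pr \<omega>)\<^sup>2) = (\<Sum>pr\<in>I. integral\<^sup>L M (\<lambda>\<omega>. (W j pr \<omega>)\<^sup>2))"
            by (rule var_sum(2)[OF M Ifin indW]) (use Wpr in auto)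
          also have "\<dots> = (\<Sum>pr\<in>I. sigma2 (fst pr) * s (fst pr) j)"
            using Wpr by (intro sum.cong) auto
          also have "\<dots> = (\<Sum>l\<in>Sst. \<Sum>i<nl l. sigma2 l * s l j)"
            unfolding I_def using Sst(1) by (subst sum.Sigma) (auto simp: split_beta)
          also have "\<dots> = (\<Sum>l\<in>Sst. real (nl l) * (sigma2 l * s l j))" by simp
          finally show ?thesis using v1 by simp
        qed
        have Wm: "W j pr \<in> borel_measurable M" if "pr \<in> I" for j pr
        proof -
          have l: "fst pr \<in> Sst" using that by (auto simp: I_def)
          have eq: "W j pr = (\<lambda>\<omega>. eps (fst pr) (snd pr) \<omega> * (X (fst pr) (snd pr) \<omega> \<bullet> Khalf (\<phi> j)))"
            by (simp add: W_def fun_eq_iff)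
          show ?thesis unfolding eq by (intro borel_measurable_times em[OF l] Xm[OF l])
        qed
        define \<kappa> where "\<kappa> j = (s 0 j powr \<nu>)\<^sup>2 / (S j + lam)\<^sup>2 * (1 / real N)\<^sup>2" for j
        have \<kappa>0: "\<kappa> j \<ge> 0" for j by (simp add: \<kappa>_def)
        define Z where "Z j \<omega> = \<kappa> j * (\<Sum>pr\<in>I. W j pr \<omega>)\<^sup>2" for j \<omega>
        have Zf: "Z j = (\<lambda>\<omega>. \<kappa> j * (\<Sum>pr\<in>I. W j pr \<omega>)\<^sup>2)" for j by (simp add: fun_eq_iff Z_def)
        have Zeq: "(s 0 j powr \<nu> * ((y \<omega> \<bullet> \<phi> j) / (S j + lam)))\<^sup>2 = Z j \<omega>" for j \<omega>
          by (simp add: Z_def \<kappa>_def yco power_mult_distrib power_divide)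
        have Qeq: "Q \<omega> = (\<Sum>j. Z j \<omega>)" for \<omega> unfolding Q_def Zeq ..
        have Zsum: "summable (\<lambda>j. Z j \<omega>)" for \<omega> using Qsum[of \<omega>] unfolding Zeq .
        have Z0: "0 \<le> Z j \<omega>" for j \<omega> using \<kappa>0[of j] by (simp add: Z_def)
        have Zm: "Z j \<in> borel_measurable M" for j
        proof -
          have "(\<lambda>\<omega>. \<Sum>pr\<in>I. W j pr \<omega>) \<in> borel_measurable M"
            by (rule borel_measurable_sum) (rule Wm)
          then show ?thesis unfolding Zf by measurable
        qed
        have Zi: "integrable M (Z j)" for j using Ea[of j] unfolding Zf by simp
        have EZ: "integral\<^sup>L M (Z j) = \<kappa> j * (\<Sum>l\<in>Sst. real (nl l) * (sigma2 l * s l j))" for j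
          using Ea[of j] unfolding Zf by simp
        define g where "g j = s 0 j powr (2*\<nu>) * S j / (S j + lam)\<^sup>2" for j
        have EZle: "integral\<^sup>L M (Z j) \<le> \<sigma>M / real N * g j" for j
        proof -
          have "(\<Sum>l\<in>Sst. real (nl l) * (sigma2 l * s l j)) \<le> (\<Sum>l\<in>Sst. real (nl l) * (\<sigma>M * s l j))"
            using \<sigma>Ml snn by (intro sum_mono mult_left_mono mult_right_mono) auto
          also have "\<dots> = \<sigma>M * real N * S j"
          proof -
            have "\<sigma>M * real N * S j = (\<Sum>l\<in>Sst. \<sigma>M * real N * (\<alpha> l * s l j))"
              unfolding S_def by (rule sum_distrib_left)
            also have "\<dots> = (\<Sum>l\<in>Sst. real (nl l) * (\<sigma>M * s l j))"
            proof (rule sum.cong[OF refl])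
              fix l
              show "\<sigma>M * real N * (\<alpha> l * s l j) = real (nl l) * (\<sigma>M * s l j)"
                using Npos unfolding \<alpha>_def by (simp add: alg2)
            qed
            finally show ?thesis by simp
          qed
          finally have h: "(\<Sum>l\<in>Sst. real (nl l) * (sigma2 l * s l j)) \<le> \<sigma>M * real N * S j" .
          have "integral\<^sup>L M (Z j) \<le> \<kappa> j * (\<sigma>M * real N * S j)"
            unfolding EZ using h \<kappa>0 by (intro mult_left_mono) auto
          also have "\<dots> = \<sigma>M / real N * g j"
          proof -
            have e2: "2*\<nu> = \<nu>+\<nu>" by simp
            have "(s 0 j powr \<nu>)\<^sup>2 = s 0 j powr (2*\<nu>)"
              unfolding e2 powr_add by (simp add: power2_eq_square)
            then show ?thesis unfolding \<kappa>_def g_def using alg1[OF Npos] by metis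
          qed
          finally show ?thesis .
        qed
        define J where "J = 1 / lam powr (1/(2*r))"
        have lp: "lam powr (1/(2*r)) \<le> 1" and lp0: "lam powr (1/(2*r)) > 0"
        proof -
          have "lam powr (1/(2*r)) \<le> 1 powr (1/(2*r))" using lam lam1 r by (intro powr_mono2) auto
          then show "lam powr (1/(2*r)) \<le> 1" by simp
          show "lam powr (1/(2*r)) > 0" using lam by simp
        qed
        have J1: "J \<ge> 1" using lp lp0 by (simp add: J_def)
        have Jpow: "J powr a = 1 / lam powr (a / (2*r))" for a
          using lam lp0 by (simp add: J_def powr_divide powr_powr)
        have Jpq: "J powr (p+q) = 1 / lam\<^sup>2"
        proof -
          have "(p+q) / (2*r) = 2" using r by (simp add: p_def q_def field_simps)
          then show ?thesis using Jpow[of "p+q"] lam by (simp add: powr_numeral)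
        qed
        have Jp1: "J powr (p+1) = 1 / lam powr (1 - 2*\<nu> + 1/(2*r))"
        proof -
          have "(p+1) / (2*r) = 1 - 2*\<nu> + 1/(2*r)" using r by (simp add: p_def field_simps)
          then show ?thesis using Jpow[of "p+1"] by simp
        qed
        have gb: "0 \<le> g j \<and> g j \<le> K1 * real (j+1) powr p \<and> g j \<le> K2 * J powr (p+q) * real (j+1) powr (-q)" for j
        proof -
          note gbs = g_bounds[OF c C lam Sl[of j] Su[of j] conjunct1[OF s0b[of j]] conjunct2[OF s0b[of j]] c1 c2 \<nu>]
          have x: "real j + 1 \<ge> 1" by simp
          show ?thesis using gbs[OF x] Jpq
            by (simp add: g_def K1_def K2_def p_def q_def add.commute)
        qed
        have gsum: "summable g" and gle: "suminf g \<le> D * J powr (p+1)"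
          using sum_bound[OF J1 p0 q1 K1 K2, of g] gb by (auto simp: D_def)
        have EZ0: "0 \<le> integral\<^sup>L M (Z j)" for j using Z0 by simp
        have EZsum: "summable (\<lambda>j. integral\<^sup>L M (Z j))"
          by (rule summable_comparison_test[OF _ summable_mult[OF gsum, of "\<sigma>M / real N"]])
             (use EZ0 EZle in auto)
        have EZtot: "(\<Sum>j. integral\<^sup>L M (Z j)) \<le> \<sigma>M * D / (real N * lam powr (1 - 2*\<nu> + 1/(2*r)))"
        proof -
          have "(\<Sum>j. integral\<^sup>L M (Z j)) \<le> (\<Sum>j. \<sigma>M / real N * g j)"
            by (rule suminf_le[OF EZle EZsum summable_mult[OF gsum]])
          also have "\<dots> = \<sigma>M / real N * suminf g" by (rule suminf_mult[OF gsum])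
          also have "\<dots> \<le> \<sigma>M / real N * (D * J powr (p+1))"
            using gle \<sigma>M0 Npos by (intro mult_left_mono) auto
          also have "\<dots> = \<sigma>M * D / (real N * lam powr (1 - 2*\<nu> + 1/(2*r)))"
            unfolding Jp1 by simp
          finally show ?thesis .
        qed
        define t where "t = B / (real N * lam powr (1 - 2*\<nu> + 1/(2*r)))"
        have t: "t > 0" using B Npos lam by (simp add: t_def)
        have Qm: "Q \<in> borel_measurable M"
        proof -
          have "(\<lambda>\<omega>. \<Sum>j. Z j \<omega>) \<in> borel_measurable M" by (rule borel_measurable_suminf) (rule Zm)
          moreover have "Q = (\<lambda>\<omega>. \<Sum>j. Z j \<omega>)" using Qeq by auto
          ultimately show ?thesis by simp
        qed
        have nnQ: "(\<integral>\<^sup>+\<omega>. ennreal (Q \<omega>) \<partial>M) = ennreal (\<Sum>j. integral\<^sup>L M (Z j))"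
        proof -
          have "(\<integral>\<^sup>+\<omega>. ennreal (Q \<omega>) \<partial>M) = (\<integral>\<^sup>+\<omega>. (\<Sum>j. ennreal (Z j \<omega>)) \<partial>M)"
            by (intro nn_integral_cong) (simp add: Qeq suminf_ennreal2[OF Z0 Zsum])
          also have "\<dots> = (\<Sum>j. \<integral>\<^sup>+\<omega>. ennreal (Z j \<omega>) \<partial>M)"
            by (rule nn_integral_suminf) (use Zm in measurable)
          also have "\<dots> = (\<Sum>j. ennreal (integral\<^sup>L M (Z j)))"
            by (intro suminf_cong nn_integral_eq_integral Zi AE_I2 Z0)
          also have "\<dots> = ennreal (\<Sum>j. integral\<^sup>L M (Z j))"
            by (rule suminf_ennreal2[OF EZ0 EZsum])
          finally show ?thesis .
        qed
        define F where "F = {\<omega> \<in> space M. 1 \<le> ennreal (1/t) * ennreal (Q \<omega>)}"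
        have Fm: "F \<in> sets M" unfolding F_def using Qm by measurable
        have sub: "{\<omega> \<in> space M. t < Q \<omega>} \<subseteq> F"
        proof
          fix \<omega> assume "\<omega> \<in> {\<omega> \<in> space M. t < Q \<omega>}"
          then have w: "\<omega> \<in> space M" and tq: "t < Q \<omega>" by auto
          have "1 \<le> (1/t) * Q \<omega>" using t tq by (simp add: field_simps)
          then have "ennreal 1 \<le> ennreal ((1/t) * Q \<omega>)" by (rule ennreal_leI)
          also have "ennreal ((1/t) * Q \<omega>) = ennreal (1/t) * ennreal (Q \<omega>)"
            using t tq by (intro ennreal_mult) auto
          finally show "\<omega> \<in> F" using w by (simp add: F_def)
        qed
        have "emeasure M F \<le> ennreal (1/t) * (\<integral>\<^sup>+\<omega>. ennreal (Q \<omega>) * indicator (space M) \<omega> \<partial>M)"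
          unfolding F_def by (rule nn_integral_Markov_inequality) (use Qm in measurable)
        also have "(\<integral>\<^sup>+\<omega>. ennreal (Q \<omega>) * indicator (space M) \<omega> \<partial>M) = (\<integral>\<^sup>+\<omega>. ennreal (Q \<omega>) \<partial>M)"
          by (intro nn_integral_cong) simp
        also have "ennreal (1/t) * (\<integral>\<^sup>+\<omega>. ennreal (Q \<omega>) \<partial>M) = ennreal ((1/t) * (\<Sum>j. integral\<^sup>L M (Z j)))"
          unfolding nnQ using t by (intro ennreal_mult[symmetric]) (auto intro: suminf_nonneg EZsum EZ0)
        also have "(1/t) * (\<Sum>j. integral\<^sup>L M (Z j)) \<le> \<sigma>M * D / B"
        proof -
          have "(1/t) * (\<Sum>j. integral\<^sup>L M (Z j)) \<le> (1/t) * (\<sigma>M * D / (real N * lam powr (1 - 2*\<nu> + 1/(2*r))))"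
            using t EZtot by (intro mult_left_mono) auto
          also have "\<dots> = \<sigma>M * D / B" using Npos lam B by (simp add: t_def)
          finally show ?thesis .
        qed
        finally have eF: "emeasure M F \<le> ennreal (\<sigma>M * D / B)" by (blast intro: ennreal_leI)
        have "emeasure M {\<omega> \<in> space M. t < Q \<omega>} \<le> ennreal (\<sigma>M * D / B)"
          using emeasure_mono[OF sub Fm] eF by (rule order.trans)
        then have "measure M {\<omega> \<in> space M. t < Q \<omega>} \<le> \<sigma>M * D / B"
          unfolding measure_def using \<sigma>M0 D B by (intro enn2real_leI) auto
        also have "\<dots> \<le> e" by (rule BD)
        finally have fin: "measure M {\<omega> \<in> space M. t < Q \<omega>} \<le> e" .
        have "{\<omega> \<in> space M.
                 (norm (op_powr_eig \<phi> (s 0) \<nu>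
                    (inv (\<lambda>x. (\<Sum>l\<in>Sst. \<alpha> l *\<^sub>R Khalf (Cop l (Khalf x))) + lam *\<^sub>R x)
                      ((1 / real N) *\<^sub>R (\<Sum>l\<in>Sst. \<Sum>i<nl l. eps l i \<omega> *\<^sub>R Khalf (X l i \<omega>))))))\<^sup>2
                 > B / (real N * lam powr (1 - 2*\<nu> + 1/(2*r)))} = {\<omega> \<in> space M. t < Q \<omega>}"
          using pw unfolding y_def t_def by simp
        then show ?thesis using fin by simp
      qed
      show "let N = (\<Sum>l\<in>Sst. nl l); \<alpha> = (\<lambda>l. real (nl l) / real N) in
              (N \<ge> 1 \<and> (\<forall>j. c * s 0 j \<le> (\<Sum>l\<in>Sst. \<alpha> l * s l j)) \<and> 0 < lam \<and> lam \<le> 1) \<longrightarrow>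
              measure M {\<omega> \<in> space M.
                 (norm (op_powr_eig \<phi> (s 0) \<nu>
                    (inv (\<lambda>x. (\<Sum>l\<in>Sst. \<alpha> l *\<^sub>R Khalf (Cop l (Khalf x))) + lam *\<^sub>R x)
                      ((1 / real N) *\<^sub>R (\<Sum>l\<in>Sst. \<Sum>i<nl l. eps l i \<omega> *\<^sub>R Khalf (X l i \<omega>))))))\<^sup>2
                 > B / (real N * lam powr (1 - 2*\<nu> + 1/(2*r)))} \<le> e"
        unfolding Let_def N_def[symmetric] using main[unfolded \<alpha>_def] by blast
    qed
  qed
qed

end
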